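(* Let $f$ and $g$ be transcendental entire functions with $f\circ g=g\circ f$, and suppose there is a polynomial $P$ of degree at least $2$ such that $P\circ f=f\circ g$. If $U\subset BU(f)$, then $g^{-1}(U)\subset BU(f)$.
   Context: For an entire function $f$, $f^n$ denotes the $n$-th iterate. The escaping set is $I(f)=\{z\in\mathbb{C}: f^n(z)\to\infty \text{ as } n\to\infty\}$, $K(f)=\{z\in\mathbb{C}: \exists R>0,\ |f^n(z)|\le R \text{ for all } n\ge 0\}$, and the Bungee set is $BU(f)=\mathbb{C}\setminus (I(f)\cup K(f))$. $g^{-1}(U)$ denotes the full preimage $\{z: g(z)\in U\}$. *)

theory Defs
  imports "HOL-Complex_Analysis.Complex_Analysis" "HOL-Computational_Algebra.Polynomial"
begin

definition entire :: "(complex \<Rightarrow> complex) \<Rightarrow> bool" where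
  "entire f \<longleftrightarrow> f holomorphic_on UNIV"

definition transcendental_entire :: "(complex \<Rightarrow> complex) \<Rightarrow> bool" where
  "transcendental_entire f \<longleftrightarrow> entire f \<and> \<not> (\<exists>p :: complex poly. \<forall>z. f z = poly p z)"

definition escaping_set :: "(complex \<Rightarrow> complex) \<Rightarrow> complex set" where
  "escaping_set f = {z. filterlim (\<lambda>n. (f ^^ n) z) at_infinity sequentially}"

definition bounded_orbit_set :: "(complex \<Rightarrow> complex) \<Rightarrow> complex set" where
  "bounded_orbit_set f = {z. \<exists>R>0. \<forall>n. norm ((f ^^ n) z) \<le> R}"

definition bungee_set :: "(complex \<Rightarrow> complex) \<Rightarrow> complex set" where
  "bungee_set f = UNIV - (escaping_set f \<union> bounded_orbit_set f)"

end

theory Submission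
  imports Defs
begin

lemma iter_comm:
  assumes "f \<circ> g = g \<circ> f"
  shows "(f ^^ n) (g z) = g ((f ^^ n) z)"
proof (induction n)
  case 0 then show ?case by simp
next
  case (Suc n)
  have "f (g w) = g (f w)" for w using assms by (metis comp_apply)
  then show ?case using Suc by simp
qed

lemma iter_P:
  assumes "f \<circ> g = g \<circ> f" and "poly P \<circ> f = f \<circ> g"
  shows "(f ^^ Suc n) (g z) = poly P ((f ^^ Suc n) z)"
proof -
  have h: "f (g w) = poly P (f w)" for w using assms(2) by (metis comp_apply)
  have "(f ^^ Suc n) (g z) = f ((f ^^ n) (g z))" by simp
  also have "\<dots> = f (g ((f ^^ n) z))" using iter_comm[OF assms(1)] by simp
  also have "\<dots> = poly P ((f ^^ Suc n) z)" using h by simp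
  finally show ?thesis .
qed

theorem theorem5:
  fixes f g :: "complex \<Rightarrow> complex" and P :: "complex poly" and U :: "complex set"
  assumes "transcendental_entire f" and "transcendental_entire g"
    and "f \<circ> g = g \<circ> f"
    and "degree P \<ge> 2"
    and "poly P \<circ> f = f \<circ> g"
    and "U \<subseteq> bungee_set f"
  shows "g -` U \<subseteq> bungee_set f"
proof
  fix z assume "z \<in> g -` U"
  then have gz: "g z \<in> bungee_set f" using assms(6) by auto
  have key: "\<And>n. (f ^^ Suc n) (g z) = poly P ((f ^^ Suc n) z)"
    using iter_P[OF assms(3) assms(5)] by blast
  have notI: "z \<notin> escaping_set f"
  proof
    assume "z \<in> escaping_set f"
    then have "filterlim (\<lambda>n. (f ^^ n) z) at_infinity sequentially"
      by (simp add: escaping_set_def)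
    then have "filterlim (\<lambda>n. (f ^^ Suc n) z) at_infinity sequentially"
      using filterlim_sequentially_Suc[of "\<lambda>n. (f ^^ n) z" at_infinity] by blast
    moreover have "filterlim (poly P) at_infinity at_infinity"
      using assms(4) by (intro filterlim_poly_at_infinity) simp
    ultimately have "filterlim (\<lambda>n. poly P ((f ^^ Suc n) z)) at_infinity sequentially"
      using filterlim_compose by blast
    then have "filterlim (\<lambda>n. (f ^^ Suc n) (g z)) at_infinity sequentially"
      using key by simp
    then have "filterlim (\<lambda>n. (f ^^ n) (g z)) at_infinity sequentially"
      using filterlim_sequentially_Suc[of "\<lambda>n. (f ^^ n) (g z)" at_infinity] by blast
    then show False using gz by (simp add: bungee_set_def escaping_set_def)
  qed
  have notK: "z \<notin> bounded_orbit_set f"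
  proof
    assume "z \<in> bounded_orbit_set f"
    then obtain R where R: "R > 0" "\<And>n. norm ((f ^^ n) z) \<le> R"
      by (auto simp: bounded_orbit_set_def)
    have "compact (poly P ` cball 0 R)"
      by (intro compact_continuous_image continuous_intros) auto
    then obtain B where B: "B > 0" "\<And>x. x \<in> poly P ` cball 0 R \<Longrightarrow> norm x \<le> B"
      using compact_imp_bounded bounded_pos by metis
    define R' where "R' = max (norm (g z)) B + 1"
    have "norm ((f ^^ n) (g z)) \<le> R'" for n
    proof (cases n)
      case 0 then show ?thesis by (simp add: R'_def)
    next
      case (Suc m)
      have "(f ^^ Suc m) z \<in> cball 0 R" using R(2)[of "Suc m"] by simp
      then have "norm (poly P ((f ^^ Suc m) z)) \<le> B" using B(2) by blast
      then show ?thesis using Suc key[of m] by (simp add: R'_def)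
    qed
    moreover have "R' > 0" unfolding R'_def using B(1) by (simp add: max_def)
    ultimately have "g z \<in> bounded_orbit_set f" unfolding bounded_orbit_set_def by blast
    then show False using gz by (simp add: bungee_set_def)
  qed
  show "z \<in> bungee_set f" using notI notK by (simp add: bungee_set_def)
qed

end
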